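(* Let $T_1,T_2$ be tables joined on column $J$, $T_1$ having a real-valued column $W$. Fix UBS parameters $(p_1,q_1)\in(0,1]^2$ for $T_1$ and an effective sampling rate $\epsilon_2\in(0,1]$ for $T_2$ with $\epsilon_2\le p_1$. Over all UBS parameters $(p_2,q_2)$ for $T_2$ with $p_2\in[\epsilon_2,1]$ and $q_2=\epsilon_2/p_2$, the variance of $\hat J_{\mathrm{sum}}=\frac{1}{\min\{p_1,p_2\}q_1q_2}\sum_{(t_1,t_2)\in S_1\bowtie_J S_2}t_1.W$ (with $S_i=\mathrm{UBS}_{p_i,q_i}(T_i,J)$) is minimized when $p_2=p_1$ and $q_2=\epsilon_2/p_1$.
   Context: $T_1,T_2$ are finite multisets of tuples with a join attribute $J$ taking values in a finite set $\mathcal U$. $X\bowtie_J Y$ is the set of pairs $(t_1,t_2)\in X\times Y$ with $t_1.J=t_2.J$. $\mathrm{UBS}_{p,q}(T,J)$: given a hash function $h:\mathcal U\to[0,1]$, each tuple $t\in T$ with $h(t.J)<p$ is included independently with probability $q$; others are excluded. The values $h(v)$ are independent uniform on $[0,1]$, the same $h$ is used for both tables, and the Bernoulli coins are independent across all tuples and independent of $h$. *)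

theory Defs
  imports "HOL-Probability.Probability"
begin

text \<open>Sample space of the joint UBS experiment on two tables:
  hash values h(v) for every v in the finite universe 'u (i.i.d. uniform on [0,1]),
  Bernoulli(q1) coins for the n1 tuples of T1 and Bernoulli(q2) coins for the n2 tuples of T2,
  all mutually independent.\<close>
definition ubs_space :: "real \<Rightarrow> real \<Rightarrow> nat \<Rightarrow> nat \<Rightarrow>
    (('u::finite \<Rightarrow> real) \<times> ((nat \<Rightarrow> bool) \<times> (nat \<Rightarrow> bool))) measure" where
  "ubs_space q1 q2 n1 n2 =
     (PiM UNIV (\<lambda>_. uniform_measure lborel {0..1::real})) \<Otimes>\<^sub>M
     ((PiM {..<n1} (\<lambda>_. measure_pmf (bernoulli_pmf q1))) \<Otimes>\<^sub>M
      (PiM {..<n2} (\<lambda>_. measure_pmf (bernoulli_pmf q2))))"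

text \<open>Tuple i of T1 is in S1 = UBS_{p1,q1}(T1,J) iff h(t.J) < p1 and its coin is heads; same for T2.
  The estimator J_sum = 1/(min p1 p2 * q1 * q2) * sum over (t1,t2) in S1 join S2 of t1.W.\<close>
definition J_sum :: "'t1 list \<Rightarrow> ('t1 \<Rightarrow> 'u) \<Rightarrow> ('t1 \<Rightarrow> real) \<Rightarrow> 't2 list \<Rightarrow> ('t2 \<Rightarrow> 'u)
    \<Rightarrow> real \<Rightarrow> real \<Rightarrow> real \<Rightarrow> real
    \<Rightarrow> ('u \<Rightarrow> real) \<times> ((nat \<Rightarrow> bool) \<times> (nat \<Rightarrow> bool)) \<Rightarrow> real" where
  "J_sum T1 J1 W T2 J2 p1 q1 p2 q2 \<omega> =
     (let h = fst \<omega>; c1 = fst (snd \<omega>); c2 = snd (snd \<omega>) in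
      (1 / (min p1 p2 * q1 * q2)) *
      (\<Sum>i<length T1. \<Sum>k<length T2.
         if h (J1 (T1 ! i)) < p1 \<and> c1 i \<and> h (J2 (T2 ! k)) < p2 \<and> c2 k
            \<and> J1 (T1 ! i) = J2 (T2 ! k)
         then W (T1 ! i) else 0))"

definition var_of :: "'a measure \<Rightarrow> ('a \<Rightarrow> real) \<Rightarrow> real" where
  "var_of M X = (\<integral>x. (X x - (\<integral>y. X y \<partial>M))\<^sup>2 \<partial>M)"

definition ubs_var :: "'t1 list \<Rightarrow> ('t1 \<Rightarrow> 'u::finite) \<Rightarrow> ('t1 \<Rightarrow> real) \<Rightarrow> 't2 list \<Rightarrow> ('t2 \<Rightarrow> 'u)
    \<Rightarrow> real \<Rightarrow> real \<Rightarrow> real \<Rightarrow> real \<Rightarrow> real" where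
  "ubs_var T1 J1 W T2 J2 p1 q1 p2 q2 =
     var_of (ubs_space q1 q2 (length T1) (length T2)) (J_sum T1 J1 W T2 J2 p1 q1 p2 q2)"

end

theory Submission
  imports Defs
begin


lemma pair_int_mult:
  fixes f :: "'a \<Rightarrow> real" and g :: "'b \<Rightarrow> real"
  assumes A: "prob_space A" and B: "prob_space B"
    and f[measurable]: "f \<in> borel_measurable A" and g[measurable]: "g \<in> borel_measurable B"
    and fb: "\<And>x. \<bar>f x\<bar> \<le> 1" and gb: "\<And>y. \<bar>g y\<bar> \<le> 1"
  shows "integrable (A \<Otimes>\<^sub>M B) (\<lambda>z. f (fst z) * g (snd z))"
    and "(\<integral>z. f (fst z) * g (snd z) \<partial>(A \<Otimes>\<^sub>M B)) = integral\<^sup>L A f * integral\<^sup>L B g"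
proof -
  interpret pair_prob_space A B using A B by (simp add: pair_prob_space_def pair_sigma_finite_def prob_space_imp_sigma_finite)
  show I: "integrable (A \<Otimes>\<^sub>M B) (\<lambda>z. f (fst z) * g (snd z))"
  proof (rule integrable_const_bound[where B=1])
    show "AE x in A \<Otimes>\<^sub>M B. norm (f (fst x) * g (snd x)) \<le> 1"
      using fb gb by (intro AE_I2) (simp add: abs_mult mult_le_one)
  qed measurable
  have I2: "integrable (A \<Otimes>\<^sub>M B) (case_prod (\<lambda>x y. f x * g y))"
    using I by (simp add: case_prod_beta')
  have "(\<integral>z. f (fst z) * g (snd z) \<partial>(A \<Otimes>\<^sub>M B)) = (\<integral>x. (\<integral>y. f x * g y \<partial>B) \<partial>A)"
    using integral_fst[OF I2] by (simp add: case_prod_beta')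
  also have "\<dots> = integral\<^sup>L A f * integral\<^sup>L B g" by simp
  finally show "(\<integral>z. f (fst z) * g (snd z) \<partial>(A \<Otimes>\<^sub>M B)) = integral\<^sup>L A f * integral\<^sup>L B g" .
qed

lemma pi_int_two:
  fixes \<phi> :: "'b \<Rightarrow> real"
  assumes I: "finite I" and N: "prob_space N" and phi[measurable]: "\<phi> \<in> borel_measurable N"
    and pb: "\<And>t. \<bar>\<phi> t\<bar> \<le> 1" and idem: "\<And>t. \<phi> t * \<phi> t = \<phi> t"
    and a: "a \<in> I" and b: "b \<in> I"
  shows "(\<integral>x. \<phi> (x a) * \<phi> (x b) \<partial>PiM I (\<lambda>_. N)) = integral\<^sup>L N \<phi> * (if a = b then 1 else integral\<^sup>L N \<phi>)"
proof -
  interpret product_prob_space "\<lambda>_. N" I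
    using N by (simp add: product_prob_space_def product_sigma_finite_def prob_space_imp_sigma_finite product_prob_space_axioms_def)
  have NF: "finite_measure N" using N by (simp add: prob_space_def)
  have NP: "measure N (space N) = 1" using N by (simp add: prob_space.prob_space)
  define F where "F j t = (if j = a then \<phi> t else 1) * (if j = b \<and> b \<noteq> a then \<phi> t else 1)" for j t
  have eq: "\<phi> (x a) * \<phi> (x b) = (\<Prod>j\<in>I. F j (x j))" for x
  proof (cases "a = b")
    case True then show ?thesis using I a b unfolding F_def prod.distrib by (simp add: idem)
  next
    case False then show ?thesis using I a b unfolding F_def prod.distrib by (simp add: prod.delta)
  qed
  have int: "integrable N (F j)" for j
    unfolding F_def by (rule finite_measure.integrable_const_bound[where B=1]) (auto simp: pb NF)
  have intF: "integral\<^sup>L N (F j) = (if j = a then integral\<^sup>L N \<phi> else 1) * (if j = b \<and> b \<noteq> a then integral\<^sup>L N \<phi> else 1)" for j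
    unfolding F_def by (cases "j = a"; cases "j = b") (auto simp: NP)
  have "(\<integral>x. \<phi> (x a) * \<phi> (x b) \<partial>PiM I (\<lambda>_. N)) = (\<integral>x. (\<Prod>j\<in>I. F j (x j)) \<partial>PiM I (\<lambda>_. N))"
    by (simp add: eq)
  also have "\<dots> = (\<Prod>j\<in>I. integral\<^sup>L N (F j))"
    by (rule product_integral_prod[OF I int])
  also have "\<dots> = integral\<^sup>L N \<phi> * (if a = b then 1 else integral\<^sup>L N \<phi>)"
    unfolding intF prod.distrib using I a b by (cases "a = b") (simp_all add: prod.delta)
  finally show ?thesis .
qed

definition ind :: "real \<Rightarrow> real \<Rightarrow> real" where "ind m t = (if t < m then 1 else 0)"
definition bb :: "bool \<Rightarrow> real" where "bb x = (if x then 1 else 0)"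

abbreviation U01 :: "real measure" where "U01 \<equiv> uniform_measure lborel {0..1::real}"

lemma prob_U01: "prob_space U01"
  by (rule prob_space_uniform_measure) auto

lemma ind_meas[measurable]: "ind m \<in> borel_measurable U01"
proof -
  have "ind m = indicator {..<m}" by (auto simp: ind_def indicator_def fun_eq_iff)
  then show ?thesis by simp
qed

lemma int_ind: assumes "0 \<le> m" "m \<le> 1" shows "integral\<^sup>L U01 (ind m) = m"
proof -
  have "ind m = indicator {..<m}" by (auto simp: ind_def indicator_def fun_eq_iff)
  then have "integral\<^sup>L U01 (ind m) = measure U01 {..<m}"
    by simp
  also have "\<dots> = measure lborel ({0..1} \<inter> {..<m}) / measure lborel {0..1::real}"
    by (subst measure_uniform_measure) auto
  also have "{0..1} \<inter> {..<m} = {0..<m}" using assms by auto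
  finally show ?thesis using assms by simp
qed

lemma int_bb: assumes "0 \<le> q" "q \<le> 1" shows "integral\<^sup>L (measure_pmf (bernoulli_pmf q)) bb = q"
  using assms by (simp add: bb_def)

definition G4 :: "real \<Rightarrow> 'u \<Rightarrow> 'u \<Rightarrow> nat \<Rightarrow> nat \<Rightarrow> nat \<Rightarrow> nat \<Rightarrow> ('u \<Rightarrow> real) \<times> ((nat \<Rightarrow> bool) \<times> (nat \<Rightarrow> bool)) \<Rightarrow> real" where
  "G4 m a a' i i' k k' \<omega> = (ind m (fst \<omega> a) * ind m (fst \<omega> a')) *
      ((bb (fst (snd \<omega>) i) * bb (fst (snd \<omega>) i')) * (bb (snd (snd \<omega>) k) * bb (snd (snd \<omega>) k')))"

lemma E4:
  fixes a a' :: "'u::finite"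
  assumes m: "0 \<le> m" "m \<le> 1" and q1: "0 \<le> q1" "q1 \<le> 1" and q2: "0 \<le> q2" "q2 \<le> 1"
    and i: "i < n1" "i' < n1" and k: "k < n2" "k' < n2"
  shows "integrable (ubs_space q1 q2 n1 n2) (G4 m a a' i i' k k')"
  and "integral\<^sup>L (ubs_space q1 q2 n1 n2) (G4 m a a' i i' k k') =
      (m * (if a = a' then 1 else m)) * ((q1 * (if i = i' then 1 else q1)) * (q2 * (if k = k' then 1 else q2)))"
proof -
  let ?H = "PiM (UNIV::'u set) (\<lambda>_. U01)"
  let ?C1 = "PiM {..<n1} (\<lambda>_. measure_pmf (bernoulli_pmf q1))"
  let ?C2 = "PiM {..<n2} (\<lambda>_. measure_pmf (bernoulli_pmf q2))"
  have PH: "prob_space ?H" by (intro prob_space_PiM prob_U01)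
  have P1: "prob_space ?C1" by (intro prob_space_PiM prob_space_measure_pmf)
  have P2: "prob_space ?C2" by (intro prob_space_PiM prob_space_measure_pmf)
  have P12: "prob_space (?C1 \<Otimes>\<^sub>M ?C2)" using P1 P2 by (simp add: prob_space_pair)
  let ?f = "\<lambda>h::'u \<Rightarrow> real. ind m (h a) * ind m (h a')"
  let ?g1 = "\<lambda>c::nat \<Rightarrow> bool. bb (c i) * bb (c i')"
  let ?g2 = "\<lambda>c::nat \<Rightarrow> bool. bb (c k) * bb (c k')"
  have bnd: "\<bar>ind m x * ind m y\<bar> \<le> 1" "\<bar>bb u * bb v\<bar> \<le> 1" for x y u v
    by (auto simp: ind_def bb_def)
  have fm: "?f \<in> borel_measurable ?H" by measurable
  have bbm: "bb \<in> borel_measurable (measure_pmf p)" for p by simp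
  have c1: "(\<lambda>x. bb (x j)) \<in> borel_measurable ?C1" if "j < n1" for j
  proof -
    have "(\<lambda>x. x j) \<in> measurable ?C1 (measure_pmf (bernoulli_pmf q1))"
      using measurable_component_singleton[of j "{..<n1}" "\<lambda>_. measure_pmf (bernoulli_pmf q1)"] that by simp
    then show ?thesis using measurable_compose[OF _ bbm] by blast
  qed
  have c2: "(\<lambda>x. bb (x j)) \<in> borel_measurable ?C2" if "j < n2" for j
  proof -
    have "(\<lambda>x. x j) \<in> measurable ?C2 (measure_pmf (bernoulli_pmf q2))"
      using measurable_component_singleton[of j "{..<n2}" "\<lambda>_. measure_pmf (bernoulli_pmf q2)"] that by simp
    then show ?thesis using measurable_compose[OF _ bbm] by blast
  qed
  have g1m: "?g1 \<in> borel_measurable ?C1" using c1 i by (intro borel_measurable_times) auto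
  have g2m: "?g2 \<in> borel_measurable ?C2" using c2 k by (intro borel_measurable_times) auto
  have i12: "integrable (?C1 \<Otimes>\<^sub>M ?C2) (\<lambda>z. ?g1 (fst z) * ?g2 (snd z))"
    and e12: "(\<integral>z. ?g1 (fst z) * ?g2 (snd z) \<partial>(?C1 \<Otimes>\<^sub>M ?C2)) = integral\<^sup>L ?C1 ?g1 * integral\<^sup>L ?C2 ?g2"
    using pair_int_mult[OF P1 P2 g1m g2m bnd(2) bnd(2)] by auto
  have gm: "(\<lambda>z. ?g1 (fst z) * ?g2 (snd z)) \<in> borel_measurable (?C1 \<Otimes>\<^sub>M ?C2)"
    by (rule borel_measurable_times[OF measurable_compose[OF measurable_fst g1m] measurable_compose[OF measurable_snd g2m]])
  have gb: "\<bar>?g1 (fst z) * ?g2 (snd z)\<bar> \<le> 1" for z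
    by (auto simp: bb_def)
  note R = pair_int_mult[OF PH P12 fm gm bnd(1) gb]
  show "integrable (ubs_space q1 q2 n1 n2) (G4 m a a' i i' k k')"
    using R(1) unfolding ubs_space_def G4_def[abs_def] by (simp add: mult.assoc)
  have "integral\<^sup>L (ubs_space q1 q2 n1 n2) (G4 m a a' i i' k k') = integral\<^sup>L ?H ?f * (integral\<^sup>L ?C1 ?g1 * integral\<^sup>L ?C2 ?g2)"
    using R(2) unfolding ubs_space_def e12 G4_def[abs_def] by (simp add: mult.assoc)
  also have "integral\<^sup>L ?H ?f = m * (if a = a' then 1 else m)"
    by (subst pi_int_two[OF _ prob_U01]) (auto simp: int_ind m ind_def)
  also have "integral\<^sup>L ?C1 ?g1 = q1 * (if i = i' then 1 else q1)"
    by (subst pi_int_two[OF _ prob_space_measure_pmf]) (auto simp: q1 i bb_def)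
  also have "integral\<^sup>L ?C2 ?g2 = q2 * (if k = k' then 1 else q2)"
    by (subst pi_int_two[OF _ prob_space_measure_pmf]) (auto simp: q2 k bb_def)
  finally show "integral\<^sup>L (ubs_space q1 q2 n1 n2) (G4 m a a' i i' k k') =
      (m * (if a = a' then 1 else m)) * ((q1 * (if i = i' then 1 else q1)) * (q2 * (if k = k' then 1 else q2)))" .
qed

lemma sq_sum2:
  fixes f :: "nat \<Rightarrow> nat \<Rightarrow> real"
  shows "(\<Sum>i\<in>I. \<Sum>k\<in>K. f i k) * (\<Sum>i\<in>I. \<Sum>k\<in>K. f i k) = (\<Sum>i\<in>I. \<Sum>k\<in>K. \<Sum>i'\<in>I. \<Sum>k'\<in>K. f i k * f i' k')"
proof -
  have "(\<Sum>i\<in>I. \<Sum>k\<in>K. f i k) * (\<Sum>i\<in>I. \<Sum>k\<in>K. f i k) = (\<Sum>i\<in>I. \<Sum>k\<in>K. f i k * (\<Sum>i\<in>I. \<Sum>k\<in>K. f i k))"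
    by (simp only: sum_distrib_right)
  also have "\<dots> = (\<Sum>i\<in>I. \<Sum>k\<in>K. \<Sum>i'\<in>I. \<Sum>k'\<in>K. f i k * f i' k')"
    by (simp only: sum_distrib_left)
  finally show ?thesis .
qed

lemma int_sum2:
  fixes f :: "'i \<Rightarrow> 'k \<Rightarrow> 'a \<Rightarrow> real"
  assumes "\<And>i k. i \<in> I \<Longrightarrow> k \<in> K \<Longrightarrow> integrable M (f i k)"
  shows "integrable M (\<lambda>x. \<Sum>i\<in>I. \<Sum>k\<in>K. f i k x)"
    and "integral\<^sup>L M (\<lambda>x. \<Sum>i\<in>I. \<Sum>k\<in>K. f i k x) = (\<Sum>i\<in>I. \<Sum>k\<in>K. integral\<^sup>L M (f i k))"
proof -
  have a: "integrable M (\<lambda>x. \<Sum>k\<in>K. f i k x)" if "i \<in> I" for i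
    using assms that by (intro Bochner_Integration.integrable_sum) auto
  show "integrable M (\<lambda>x. \<Sum>i\<in>I. \<Sum>k\<in>K. f i k x)"
    by (rule Bochner_Integration.integrable_sum) (rule a)
  have "integral\<^sup>L M (\<lambda>x. \<Sum>i\<in>I. \<Sum>k\<in>K. f i k x) = (\<Sum>i\<in>I. integral\<^sup>L M (\<lambda>x. \<Sum>k\<in>K. f i k x))"
    using a by (rule Bochner_Integration.integral_sum)
  also have "\<dots> = (\<Sum>i\<in>I. \<Sum>k\<in>K. integral\<^sup>L M (f i k))"
  proof (rule sum.cong[OF refl])
    fix i assume "i \<in> I"
    then show "integral\<^sup>L M (\<lambda>x. \<Sum>k\<in>K. f i k x) = (\<Sum>k\<in>K. integral\<^sup>L M (f i k))"
      using assms by (intro Bochner_Integration.integral_sum) auto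
  qed
  finally show "integral\<^sup>L M (\<lambda>x. \<Sum>i\<in>I. \<Sum>k\<in>K. f i k x) = (\<Sum>i\<in>I. \<Sum>k\<in>K. integral\<^sup>L M (f i k))" .
qed

lemma int_sum4:
  fixes f :: "'i \<Rightarrow> 'k \<Rightarrow> 'i \<Rightarrow> 'k \<Rightarrow> 'a \<Rightarrow> real"
  assumes "\<And>i k i' k'. i \<in> I \<Longrightarrow> k \<in> K \<Longrightarrow> i' \<in> I \<Longrightarrow> k' \<in> K \<Longrightarrow> integrable M (f i k i' k')"
  shows "integrable M (\<lambda>x. \<Sum>i\<in>I. \<Sum>k\<in>K. \<Sum>i'\<in>I. \<Sum>k'\<in>K. f i k i' k' x)"
    and "integral\<^sup>L M (\<lambda>x. \<Sum>i\<in>I. \<Sum>k\<in>K. \<Sum>i'\<in>I. \<Sum>k'\<in>K. f i k i' k' x) =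
      (\<Sum>i\<in>I. \<Sum>k\<in>K. \<Sum>i'\<in>I. \<Sum>k'\<in>K. integral\<^sup>L M (f i k i' k'))"
proof -
  have a: "integrable M (\<lambda>x. \<Sum>i'\<in>I. \<Sum>k'\<in>K. f i k i' k' x)"
    and b: "integral\<^sup>L M (\<lambda>x. \<Sum>i'\<in>I. \<Sum>k'\<in>K. f i k i' k' x) = (\<Sum>i'\<in>I. \<Sum>k'\<in>K. integral\<^sup>L M (f i k i' k'))"
    if "i \<in> I" "k \<in> K" for i k
    using int_sum2[where I=I and K=K and f="f i k" and M=M] assms that by auto
  show "integrable M (\<lambda>x. \<Sum>i\<in>I. \<Sum>k\<in>K. \<Sum>i'\<in>I. \<Sum>k'\<in>K. f i k i' k' x)"
    by (rule int_sum2(1)) (rule a)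
  show "integral\<^sup>L M (\<lambda>x. \<Sum>i\<in>I. \<Sum>k\<in>K. \<Sum>i'\<in>I. \<Sum>k'\<in>K. f i k i' k' x) =
      (\<Sum>i\<in>I. \<Sum>k\<in>K. \<Sum>i'\<in>I. \<Sum>k'\<in>K. integral\<^sup>L M (f i k i' k'))"
  proof -
    have "integral\<^sup>L M (\<lambda>x. \<Sum>i\<in>I. \<Sum>k\<in>K. \<Sum>i'\<in>I. \<Sum>k'\<in>K. f i k i' k' x) =
      (\<Sum>i\<in>I. \<Sum>k\<in>K. integral\<^sup>L M (\<lambda>x. \<Sum>i'\<in>I. \<Sum>k'\<in>K. f i k i' k' x))"
      by (rule int_sum2(2)) (rule a)
    also have "\<dots> = (\<Sum>i\<in>I. \<Sum>k\<in>K. \<Sum>i'\<in>I. \<Sum>k'\<in>K. integral\<^sup>L M (f i k i' k'))"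
      by (intro sum.cong refl b)
    finally show ?thesis .
  qed
qed

lemma prob_ubs: "prob_space (ubs_space q1 q2 n1 n2)"
  unfolding ubs_space_def
  by (intro prob_space_pair prob_space_PiM prob_U01 prob_space_measure_pmf)

definition Ac :: "'t1 list \<Rightarrow> ('t1 \<Rightarrow> 'u) \<Rightarrow> ('t1 \<Rightarrow> real) \<Rightarrow> 't2 list \<Rightarrow> ('t2 \<Rightarrow> 'u) \<Rightarrow> nat \<Rightarrow> nat \<Rightarrow> real" where
  "Ac T1 J1 W T2 J2 i k = (if J1 (T1 ! i) = J2 (T2 ! k) then W (T1 ! i) else 0)"

definition Rc :: "'t1 list \<Rightarrow> ('t1 \<Rightarrow> 'u) \<Rightarrow> real \<Rightarrow> real \<Rightarrow> real \<Rightarrow> nat \<Rightarrow> nat \<Rightarrow> nat \<Rightarrow> nat \<Rightarrow> real" where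
  "Rc T1 J1 m q1 q2 i k i' k' = (if J1 (T1 ! i) = J1 (T1 ! i') then 1 / m else 1) *
     (if i = i' then 1 / q1 else 1) * (if k = k' then 1 / q2 else 1)"

definition S2 where
  "S2 T1 J1 W T2 J2 m q1 q2 = (\<Sum>i<length T1. \<Sum>k<length T2. \<Sum>i'<length T1. \<Sum>k'<length T2.
      Ac T1 J1 W T2 J2 i k * Ac T1 J1 W T2 J2 i' k' * Rc T1 J1 m q1 q2 i k i' k')"



lemma var_formula:
  fixes T1 :: "'t1 list" and J1 :: "'t1 \<Rightarrow> 'u::finite" and W :: "'t1 \<Rightarrow> real"
    and T2 :: "'t2 list" and J2 :: "'t2 \<Rightarrow> 'u"
  assumes p1: "0 < p1" "p1 \<le> 1" and p2: "0 < p2" "p2 \<le> 1" and q1: "0 < q1" "q1 \<le> 1" and q2: "0 < q2" "q2 \<le> 1"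
  shows "ubs_var T1 J1 W T2 J2 p1 q1 p2 q2 = S2 T1 J1 W T2 J2 (min p1 p2) q1 q2 -
     (\<Sum>i<length T1. \<Sum>k<length T2. Ac T1 J1 W T2 J2 i k)\<^sup>2"
proof -
  define n1 where "n1 = length T1"
  define n2 where "n2 = length T2"
  define m where "m = min p1 p2"
  define M where "M = (ubs_space q1 q2 n1 n2 :: (('u \<Rightarrow> real) \<times> _) measure)"
  define u where "u i = J1 (T1 ! i)" for i
  define A where "A i k = Ac T1 J1 W T2 J2 i k" for i k
  define \<kappa> where "\<kappa> = 1 / (m * q1 * q2)"
  have m: "0 < m" "m \<le> 1" using p1 p2 by (auto simp: m_def)
  interpret P: prob_space M unfolding M_def by (rule prob_ubs)
  define X where "X = J_sum T1 J1 W T2 J2 p1 q1 p2 q2"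
  define Y where "Y i k = G4 m (u i) (u i) i i k k" for i k
  have Xeq: "X \<omega> = \<kappa> * (\<Sum>i<n1. \<Sum>k<n2. A i k * Y i k \<omega>)" for \<omega>
    unfolding X_def J_sum_def Let_def \<kappa>_def m_def n1_def n2_def
    by (intro arg_cong2[where f="(*)"] refl sum.cong)
       (auto simp: A_def Ac_def Y_def G4_def ind_def bb_def u_def m_def)
  have YY: "Y i k \<omega> * Y i' k' \<omega> = G4 m (u i) (u i') i i' k k' \<omega>" for i k i' k' \<omega>
    unfolding Y_def G4_def by (simp add: ind_def bb_def)
  have X2: "(X \<omega>)\<^sup>2 = \<kappa>\<^sup>2 * (\<Sum>i<n1. \<Sum>k<n2. \<Sum>i'<n1. \<Sum>k'<n2. A i k * A i' k' * G4 m (u i) (u i') i i' k k' \<omega>)" for \<omega>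
  proof -
    have "(X \<omega>)\<^sup>2 = \<kappa>\<^sup>2 * ((\<Sum>i<n1. \<Sum>k<n2. A i k * Y i k \<omega>) * (\<Sum>i<n1. \<Sum>k<n2. A i k * Y i k \<omega>))"
      unfolding Xeq by (simp add: power2_eq_square)
    also have "\<dots> = \<kappa>\<^sup>2 * (\<Sum>i<n1. \<Sum>k<n2. \<Sum>i'<n1. \<Sum>k'<n2. A i k * Y i k \<omega> * (A i' k' * Y i' k' \<omega>))"
      by (simp only: sq_sum2)
    finally show ?thesis by (simp add: YY[symmetric] mult_ac)
  qed
  have intG: "integrable M (G4 m (u i) (u i') i i' k k')"
    and eG: "integral\<^sup>L M (G4 m (u i) (u i') i i' k k') = (m * (if u i = u i' then 1 else m)) * ((q1 * (if i = i' then 1 else q1)) * (q2 * (if k = k' then 1 else q2)))"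
    if "i < n1" "i' < n1" "k < n2" "k' < n2" for i i' k k'
    using E4[of m q1 q2 i n1 i' k n2 k' "u i" "u i'"] that m q1 q2 unfolding M_def by auto
  have intT: "integrable M (\<lambda>\<omega>. c * G4 m (u i) (u i') i i' k k' \<omega>)"
    if "i < n1" "i' < n1" "k < n2" "k' < n2" for c i i' k k'
    using integrable_mult_right[OF intG[OF that]] .
  note S2I = int_sum2[where I="{..<n1}" and K="{..<n2}" and f="\<lambda>i k \<omega>. A i k * Y i k \<omega>" and M=M]
  note S4I = int_sum4[where I="{..<n1}" and K="{..<n2}" and f="\<lambda>i k i' k' \<omega>. A i k * A i' k' * G4 m (u i) (u i') i i' k k' \<omega>" and M=M]
  have intX: "integrable M X"
    unfolding Xeq[abs_def] using S2I(1) intT by (auto simp: Y_def)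
  have intX2: "integrable M (\<lambda>\<omega>. (X \<omega>)\<^sup>2)"
    unfolding X2 using S4I(1) intT by auto
  have EX: "integral\<^sup>L M X = (\<Sum>i<n1. \<Sum>k<n2. A i k)"
  proof -
    have "integral\<^sup>L M X = \<kappa> * (\<Sum>i<n1. \<Sum>k<n2. integral\<^sup>L M (\<lambda>\<omega>. A i k * Y i k \<omega>))"
      unfolding Xeq[abs_def] using S2I(2) intT by (auto simp: Y_def)
    also have "\<dots> = \<kappa> * (\<Sum>i<n1. \<Sum>k<n2. A i k * (m * q1 * q2))"
      using eG by (auto simp: Y_def intro!: sum.cong)
    also have "\<dots> = (\<Sum>i<n1. \<Sum>k<n2. A i k)"
      using m q1 q2 by (simp add: \<kappa>_def sum_distrib_left)
    finally show ?thesis .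
  qed
  have EX2: "integral\<^sup>L M (\<lambda>\<omega>. (X \<omega>)\<^sup>2) = S2 T1 J1 W T2 J2 m q1 q2"
  proof -
    have "integral\<^sup>L M (\<lambda>\<omega>. (X \<omega>)\<^sup>2) = \<kappa>\<^sup>2 * (\<Sum>i<n1. \<Sum>k<n2. \<Sum>i'<n1. \<Sum>k'<n2.
         integral\<^sup>L M (\<lambda>\<omega>. A i k * A i' k' * G4 m (u i) (u i') i i' k k' \<omega>))"
      unfolding X2 using S4I(2) intT by auto
    also have "\<dots> = \<kappa>\<^sup>2 * (\<Sum>i<n1. \<Sum>k<n2. \<Sum>i'<n1. \<Sum>k'<n2. A i k * A i' k' *
        ((m * (if u i = u i' then 1 else m)) * ((q1 * (if i = i' then 1 else q1)) * (q2 * (if k = k' then 1 else q2)))))"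
      using eG by (auto intro!: sum.cong)
    also have "\<dots> = S2 T1 J1 W T2 J2 m q1 q2"
      unfolding S2_def sum_distrib_left n1_def[symmetric] n2_def[symmetric]
      using m q1 q2
      by (intro sum.cong refl) (simp add: \<kappa>_def A_def Rc_def u_def power2_eq_square field_simps)
    finally show ?thesis .
  qed
  have "ubs_var T1 J1 W T2 J2 p1 q1 p2 q2 = P.variance X"
    unfolding ubs_var_def var_of_def M_def X_def n1_def n2_def ..
  also have "\<dots> = S2 T1 J1 W T2 J2 m q1 q2 - (\<Sum>i<n1. \<Sum>k<n2. A i k)\<^sup>2"
    using P.variance_eq[OF intX intX2] unfolding EX EX2 .
  finally show ?thesis unfolding m_def n1_def n2_def A_def .
qed



lemma sq_sum: "(\<Sum>i\<in>A. f i)\<^sup>2 = (\<Sum>i\<in>A. \<Sum>j\<in>A. f i * f j :: real)"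
  by (simp add: power2_eq_square sum_product)

lemma quad_nonneg:
  fixes u :: "nat \<Rightarrow> 'u::finite" and w :: "nat \<Rightarrow> real" and N :: "'u \<Rightarrow> real"
  assumes N: "\<And>v. 0 \<le> N v" and q: "0 < q" "q \<le> 1"
  shows "0 \<le> (\<Sum>i<n. \<Sum>i'<n. w i * w i' * (if u i = u i' then 1 else 0) * (if i = i' then 1 / q else 1) * N (u i))"
proof -
  have split: "w i * w i' * (if u i = u i' then 1 else 0) * (if i = i' then 1 / q else 1) * N (u i) =
      (if u i = u i' then w i * w i' * N (u i) else 0) + (if i' = i then (1 / q - 1) * (w i)\<^sup>2 * N (u i) else 0)" for i i'
    by (auto simp: power2_eq_square algebra_simps)
  have first: "(\<Sum>i<n. \<Sum>i'<n. (if u i = u i' then w i * w i' * N (u i) else 0)) =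
      (\<Sum>v\<in>UNIV. N v * (\<Sum>i<n. if u i = v then w i else 0)\<^sup>2)"
  proof -
    have "(\<Sum>v\<in>UNIV. N v * (\<Sum>i<n. if u i = v then w i else 0)\<^sup>2) =
        (\<Sum>v\<in>UNIV. \<Sum>i<n. \<Sum>i'<n. N v * ((if u i = v then w i else 0) * (if u i' = v then w i' else 0)))"
      by (simp only: sq_sum sum_distrib_left)
    also have "\<dots> = (\<Sum>i<n. \<Sum>v\<in>UNIV. \<Sum>i'<n. N v * ((if u i = v then w i else 0) * (if u i' = v then w i' else 0)))"
      by (rule sum.swap)
    also have "\<dots> = (\<Sum>i<n. \<Sum>i'<n. \<Sum>v\<in>UNIV. N v * ((if u i = v then w i else 0) * (if u i' = v then w i' else 0)))"
      by (rule sum.cong[OF refl], rule sum.swap)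
    also have "\<dots> = (\<Sum>i<n. \<Sum>i'<n. (if u i = u i' then w i * w i' * N (u i) else 0))"
    proof (intro sum.cong refl)
      fix i i'
      have "(\<lambda>v. N v * ((if u i = v then w i else 0) * (if u i' = v then w i' else 0))) =
          (\<lambda>v. if v = u i then (if u i = u i' then w i * w i' * N (u i) else 0) else 0)"
        by (auto simp: fun_eq_iff)
      then have "(\<Sum>v\<in>UNIV. N v * ((if u i = v then w i else 0) * (if u i' = v then w i' else 0))) =
          (\<Sum>v\<in>UNIV. if v = u i then (if u i = u i' then w i * w i' * N (u i) else 0) else 0)"
        by (rule arg_cong)
      also have "\<dots> = (if u i = u i' then w i * w i' * N (u i) else 0)"
        by (rule trans[OF sum.delta]) simp_all
      finally show "(\<Sum>v\<in>UNIV. N v * ((if u i = v then w i else 0) * (if u i' = v then w i' else 0))) =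
          (if u i = u i' then w i * w i' * N (u i) else 0)" .
    qed
    finally show ?thesis by simp
  qed
  have "(\<Sum>i<n. \<Sum>i'<n. w i * w i' * (if u i = u i' then 1 else 0) * (if i = i' then 1 / q else 1) * N (u i)) =
      (\<Sum>i<n. \<Sum>i'<n. (if u i = u i' then w i * w i' * N (u i) else 0)) + (\<Sum>i<n. (1 / q - 1) * (w i)\<^sup>2 * N (u i))"
    unfolding split sum.distrib by (simp add: sum.delta)
  also have "\<dots> \<ge> 0"
    unfolding first using N q by (intro add_nonneg_nonneg sum_nonneg mult_nonneg_nonneg) auto
  finally show ?thesis .
qed

lemma S2_mono:
  fixes T1 :: "'t1 list" and J1 :: "'t1 \<Rightarrow> 'u::finite" and W :: "'t1 \<Rightarrow> real"
    and T2 :: "'t2 list" and J2 :: "'t2 \<Rightarrow> 'u"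
  assumes q1: "0 < q1" "q1 \<le> 1"
    and h1: "1 / m' \<le> 1 / m" and h2: "1 / m' * (1 / Q') \<le> 1 / m * (1 / Q)"
  shows "S2 T1 J1 W T2 J2 m' q1 Q' \<le> S2 T1 J1 W T2 J2 m q1 Q"
proof -
  define n1 where "n1 = length T1"
  define n2 where "n2 = length T2"
  define u where "u i = J1 (T1 ! i)" for i
  define z where "z k = J2 (T2 ! k)" for k
  define w where "w i = W (T1 ! i)" for i
  define D where "D k k' = (if k = k' then 1 / m * (1 / Q) - 1 / m' * (1 / Q') else 1 / m - 1 / m')" for k k' :: nat
  define N where "N v = (\<Sum>k<n2. \<Sum>k'<n2. if z k = v \<and> z k' = v then D k k' else 0)" for v
  define C where "C i i' = w i * w i' * (if u i = u i' then 1 else 0) * (if i = i' then 1 / q1 else 1)" for i i'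
  have D0: "0 \<le> D k k'" for k k' using h1 h2 by (auto simp: D_def)
  have N0: "0 \<le> N v" for v unfolding N_def using D0 by (intro sum_nonneg) auto
  have pw: "Ac T1 J1 W T2 J2 i k * Ac T1 J1 W T2 J2 i' k' * Rc T1 J1 m q1 Q i k i' k' -
      Ac T1 J1 W T2 J2 i k * Ac T1 J1 W T2 J2 i' k' * Rc T1 J1 m' q1 Q' i k i' k' =
      C i i' * (if z k = u i \<and> z k' = u i then D k k' else 0)" for i k i' k'
    unfolding Ac_def Rc_def C_def D_def u_def[symmetric] z_def[symmetric] w_def[symmetric]
    by (cases "u i = z k"; cases "u i' = z k'"; cases "u i = u i'"; cases "k = k'") (simp_all add: algebra_simps)
  have "S2 T1 J1 W T2 J2 m q1 Q - S2 T1 J1 W T2 J2 m' q1 Q' =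
      (\<Sum>i<n1. \<Sum>k<n2. \<Sum>i'<n1. \<Sum>k'<n2. C i i' * (if z k = u i \<and> z k' = u i then D k k' else 0))"
    unfolding S2_def n1_def n2_def pw[symmetric] by (simp only: sum_subtractf)
  also have "\<dots> = (\<Sum>i<n1. \<Sum>i'<n1. \<Sum>k<n2. \<Sum>k'<n2. C i i' * (if z k = u i \<and> z k' = u i then D k k' else 0))"
    by (rule sum.cong[OF refl], rule sum.swap)
  also have "\<dots> = (\<Sum>i<n1. \<Sum>i'<n1. C i i' * N (u i))"
    unfolding N_def by (simp only: sum_distrib_left)
  also have "\<dots> \<ge> 0"
    unfolding C_def using quad_nonneg[where N=N and w=w and u=u and n=n1, OF N0 q1] by simp
  finally show ?thesis by simp
qed


theorem lemma6:
  fixes T1 :: "'t1 list" and J1 :: "'t1 \<Rightarrow> 'u::finite" and W :: "'t1 \<Rightarrow> real"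
    and T2 :: "'t2 list" and J2 :: "'t2 \<Rightarrow> 'u"
    and p1 q1 eps2 p2 :: real
  assumes "0 < p1" "p1 \<le> 1" "0 < q1" "q1 \<le> 1"
    and "0 < eps2" "eps2 \<le> 1" "eps2 \<le> p1"
    and "eps2 \<le> p2" "p2 \<le> 1"
  shows "ubs_var T1 J1 W T2 J2 p1 q1 p1 (eps2 / p1) \<le> ubs_var T1 J1 W T2 J2 p1 q1 p2 (eps2 / p2)"
proof -
  have p2: "0 < p2" using assms by linarith
  have Q1: "0 < eps2 / p1" "eps2 / p1 \<le> 1" using assms by (auto simp: divide_le_eq)
  have Q2: "0 < eps2 / p2" "eps2 / p2 \<le> 1" using assms p2 by (auto simp: divide_le_eq)
  note V1 = var_formula[OF assms(1,2) assms(1,2) assms(3,4) Q1, of T1 J1 W T2 J2]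
  note V2 = var_formula[OF assms(1,2) p2 assms(9) assms(3,4) Q2, of T1 J1 W T2 J2]
  have h1: "1 / p1 \<le> 1 / min p1 p2"
    using assms p2 by (auto simp: min_def divide_simps)
  have h2: "1 / p1 * (1 / (eps2 / p1)) \<le> 1 / min p1 p2 * (1 / (eps2 / p2))"
    using assms p2 by (cases "p1 \<le> p2") (auto simp: min_def divide_simps)
  have "S2 T1 J1 W T2 J2 p1 q1 (eps2 / p1) \<le> S2 T1 J1 W T2 J2 (min p1 p2) q1 (eps2 / p2)"
    by (rule S2_mono[OF assms(3,4) h1 h2])
  then show ?thesis unfolding V1 V2 by simp
qed

end
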